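(* Let $n\ge1$, $k\ge1$, let $t\neq0$, and let $a_1,\dots,a_n>0$ be pairwise distinct. Then \[ \theta_{n;k}(t)=(-1)^{n-1}\sum_{j=1}^{n}\frac{\prod_{m=1}^{n}\big(\frac{1-t}{a_j t}+\frac1{a_m}\big)}{\prod_{\ell=1,\ell\neq j}^{n}\big(\frac1{a_j}-\frac1{a_\ell}\big)}\;a_j^{k+1}\,t^{k}. \]
   Context: Let $\boldsymbol a=(a_j)_{j\ge1}$ be a sequence of positive reals. For integers $n\ge1$, $k\ge0$ let $\mathcal M_{n,k}=\{(\ell_1,\dots,\ell_k)\in\mathbb N^k: n\ge\ell_1\ge\cdots\ge\ell_k\ge1\}$. For $\vec\ell\in\mathcal M_{n,k}$ let $\sigma(\vec\ell)=|\{1\le j\le k-1:\ell_j=\ell_{j+1}\}|$ and $w(\vec\ell)=\prod_{j=1}^k a_{\ell_j}$. Define $\theta_{n;k}(t)=\sum_{\vec\ell\in\mathcal M_{n,k}}w(\vec\ell)\,t^{\sigma(\vec\ell)}$. *)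

theory Defs
  imports Complex_Main
begin

text \<open>M_{n,k}: weakly decreasing sequences (l_1,...,l_k) with n >= l_1 >= ... >= l_k >= 1,
  represented as lists of length k (0-indexed).\<close>
definition Mset :: "nat \<Rightarrow> nat \<Rightarrow> nat list set" where
  "Mset n k = {ls. length ls = k \<and> sorted_wrt (\<ge>) ls \<and> set ls \<subseteq> {1..n}}"

definition sig :: "nat list \<Rightarrow> nat" where
  "sig ls = card {j. Suc j < length ls \<and> ls ! j = ls ! Suc j}"

definition wt :: "(nat \<Rightarrow> real) \<Rightarrow> nat list \<Rightarrow> real" where
  "wt a ls = (\<Prod>i<length ls. a (ls ! i))"

definition theta :: "(nat \<Rightarrow> real) \<Rightarrow> nat \<Rightarrow> nat \<Rightarrow> real \<Rightarrow> real" where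
  "theta a n k t = (\<Sum>ls\<in>Mset n k. wt a ls * t ^ sig ls)"

end

theory Submission
  imports Defs
begin

definition Dn :: "(nat \<Rightarrow> real) \<Rightarrow> nat set \<Rightarrow> nat \<Rightarrow> real" where
  "Dn a S j = (\<Prod>l\<in>S - {j}. 1 / a j - 1 / a l)"

definition sg :: "nat set \<Rightarrow> real" where
  "sg S = (-1) ^ (card S - 1)"

lemma Dn_remove:
  assumes "finite S" "u \<in> S" "j \<in> S" "j \<noteq> u"
  shows "Dn a S j = (1 / a j - 1 / a u) * Dn a (S - {u}) j"
proof -
  have "S - {j} = insert u (S - {u} - {j})" using assms by auto
  thus ?thesis unfolding Dn_def using assms by (simp add: prod.insert)
qed

lemma rem:
  assumes "finite S" "u \<in> S" "inj_on a S" "\<forall>j\<in>S. a j \<noteq> 0"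
  shows "(\<Sum>j\<in>S. g j * (1/a j - 1/a u) / Dn a S j) = (\<Sum>j\<in>S-{u}. g j / Dn a (S-{u}) j)"
proof -
  have "(\<Sum>j\<in>S. g j * (1/a j - 1/a u) / Dn a S j) = (\<Sum>j\<in>S-{u}. g j * (1/a j - 1/a u) / Dn a S j)"
    using assms by (simp add: sum.remove)
  also have "\<dots> = (\<Sum>j\<in>S-{u}. g j / Dn a (S-{u}) j)"
  proof (rule sum.cong)
    fix j assume j: "j \<in> S - {u}"
    have "a j \<noteq> a u" using assms j by (auto dest: inj_onD)
    hence ne: "1 / a j - 1 / a u \<noteq> 0" using assms j by (auto simp: field_simps)
    show "g j * (1/a j - 1/a u) / Dn a S j = g j / Dn a (S-{u}) j"
      using Dn_remove[OF assms(1,2), of j a] j ne by simp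
  qed simp
  finally show ?thesis .
qed

lemma Dn_single: "Dn a {v} v = 1" by (simp add: Dn_def)

lemma E0:
  assumes "finite S" "2 \<le> card S" "inj_on a S" "\<forall>j\<in>S. a j \<noteq> 0"
  shows "(\<Sum>j\<in>S. 1 / Dn a S j) = 0"
  using assms
proof (induction "card S" arbitrary: S rule: less_induct)
  case less
  from less.prems obtain u v where uv: "u \<in> S" "v \<in> S" "u \<noteq> v"
    by (metis card_2_iff' card_le_Suc_iff numeral_2_eq_2 insert_iff)
  have ru: "(\<Sum>j\<in>S. 1 * (1/a j - 1/a u) / Dn a S j) = (\<Sum>j\<in>S-{u}. 1 / Dn a (S-{u}) j)"
    by (rule rem) (use less.prems uv in auto)
  have rv: "(\<Sum>j\<in>S. 1 * (1/a j - 1/a v) / Dn a S j) = (\<Sum>j\<in>S-{v}. 1 / Dn a (S-{v}) j)"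
    by (rule rem) (use less.prems uv in auto)
  have diff: "(\<Sum>j\<in>S. 1 * (1/a j - 1/a u) / Dn a S j) - (\<Sum>j\<in>S. 1 * (1/a j - 1/a v) / Dn a S j)
      = (1/a v - 1/a u) * (\<Sum>j\<in>S. 1 / Dn a S j)"
    by (simp add: sum_subtractf[symmetric] sum_distrib_left diff_divide_distrib)
  have eq: "(\<Sum>j\<in>S-{u}. 1 / Dn a (S-{u}) j) = (\<Sum>j\<in>S-{v}. 1 / Dn a (S-{v}) j)"
  proof (cases "card S = 2")
    case True
    have "{u, v} = S" using uv less.prems True
      by (intro card_subset_eq) auto
    hence "S = {u, v}" by simp
    hence "S - {u} = {v}" "S - {v} = {u}" using uv by auto
    thus ?thesis by (simp add: Dn_single)
  next
    case False
    have c: "card (S - {u}) < card S" "card (S - {v}) < card S"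
      using less.prems uv by (auto intro: card_Diff1_less)
    have "2 \<le> card (S - {u})" "2 \<le> card (S - {v})"
      using less.prems uv False by (auto simp: card_Diff_singleton)
    hence "(\<Sum>j\<in>S-{u}. 1 / Dn a (S-{u}) j) = 0" "(\<Sum>j\<in>S-{v}. 1 / Dn a (S-{v}) j) = 0"
      using less.hyps[OF c(1)] less.hyps[OF c(2)] less.prems by (auto intro: inj_on_subset)
    thus ?thesis by simp
  qed
  have "a u \<noteq> a v" using less.prems uv by (auto dest: inj_onD)
  hence "1/a v - 1/a u \<noteq> 0" using less.prems uv by (auto simp: field_simps)
  thus ?case using diff ru rv eq by simp
qed

lemma Mlem:
  assumes "finite S" "S \<noteq> {}" "inj_on a S" "\<forall>j\<in>S. a j \<noteq> 0"
  shows "sg S * (\<Sum>j\<in>S. a j / Dn a S j) = (\<Prod>j\<in>S. a j)"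
  using assms
proof (induction S rule: finite_ne_induct)
  case (singleton x)
  thus ?case by (simp add: sg_def Dn_single)
next
  case (insert x F)
  let ?S = "insert x F"
  have cF: "card F \<ge> 1" using insert by (simp add: Suc_leI card_gt_0_iff)
  have cS: "card ?S = Suc (card F)" using insert by simp
  have e0: "(\<Sum>j\<in>?S. 1 / Dn a ?S j) = 0"
    by (rule E0) (use insert cF cS in auto)
  have r: "(\<Sum>j\<in>?S. (- a j * a x) * (1/a j - 1/a x) / Dn a ?S j) = (\<Sum>j\<in>F. (- a j * a x) / Dn a F j)"
    using rem[of ?S x a "\<lambda>j. - a j * a x"] insert by simp
  have "(\<Sum>j\<in>?S. a j / Dn a ?S j) = (\<Sum>j\<in>?S. (- a j * a x) * (1/a j - 1/a x) / Dn a ?S j) + a x * (\<Sum>j\<in>?S. 1 / Dn a ?S j)"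
    unfolding sum_distrib_left sum.distrib[symmetric]
  proof (rule sum.cong)
    fix j assume j: "j \<in> ?S"
    have h: "a j = (- a j * a x) * (1/a j - 1/a x) + a x" using insert j by (auto simp: field_simps)
    have "a j / Dn a ?S j = ((- a j * a x) * (1/a j - 1/a x) + a x) / Dn a ?S j"
      using h by (rule arg_cong)
    also have "\<dots> = (- a j * a x) * (1/a j - 1/a x) / Dn a ?S j + a x * (1 / Dn a ?S j)"
      by (simp only: add_divide_distrib times_divide_eq_right mult_1_right)
    finally show "a j / Dn a ?S j = (- a j * a x) * (1/a j - 1/a x) / Dn a ?S j + a x * (1 / Dn a ?S j)" .
  qed simp
  also have "\<dots> = - a x * (\<Sum>j\<in>F. a j / Dn a F j)"
    using r e0 by (simp add: sum_distrib_left field_simps)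
  finally have "(\<Sum>j\<in>?S. a j / Dn a ?S j) = - a x * (\<Sum>j\<in>F. a j / Dn a F j)" .
  moreover have "sg ?S = - sg F" using cS cF unfolding sg_def
    by (cases "card F") auto
  moreover have "sg F * (\<Sum>j\<in>F. a j / Dn a F j) = (\<Prod>j\<in>F. a j)"
    using insert by (auto intro: inj_on_subset)
  ultimately show ?case using insert by simp
qed

lemma Klem:
  assumes "finite (Y::nat set)"
  shows "\<forall>S. finite S \<longrightarrow> inj_on a S \<longrightarrow> (\<forall>j\<in>S. a j \<noteq> 0) \<longrightarrow> card Y \<le> card S \<longrightarrow>
    sg S * (\<Sum>j\<in>S. (\<Prod>m\<in>Y. c / a j + y m) * a j / Dn a S j)
      = (\<Prod>m\<in>Y. y m) * (\<Prod>l\<in>S. a l) - (if card Y = card S then (-c) ^ card S else 0)"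
  using assms
proof (induction Y rule: finite_induct)
  case empty
  show ?case
  proof (intro allI impI)
    fix S assume S: "finite S" "inj_on a S" "\<forall>j\<in>S. a j \<noteq> 0" "card ({}::nat set) \<le> card S"
    show "sg S * (\<Sum>j\<in>S. (\<Prod>m\<in>{}. c / a j + y m) * a j / Dn a S j)
      = (\<Prod>m\<in>{}. y m) * (\<Prod>l\<in>S. a l) - (if card ({}::nat set) = card S then (-c) ^ card S else 0)"
    proof (cases "S = {}")
      case True thus ?thesis by simp
    next
      case False
      hence "card S \<noteq> 0" using S by simp
      thus ?thesis using Mlem[OF S(1) False S(2,3)] False by simp
    qed
  qed
next
  case (insert w Y)
  show ?case
  proof (intro allI impI)
    fix S assume S: "finite S" "inj_on a S" "\<forall>j\<in>S. a j \<noteq> 0" "card (insert w Y) \<le> card S"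
    let ?Q = "\<lambda>j. (\<Prod>m\<in>Y. c / a j + y m)"
    have cY: "card (insert w Y) = Suc (card Y)" using insert by simp
    hence "S \<noteq> {}" using S by auto
    then obtain u where u: "u \<in> S" by auto
    have cSu: "card (S - {u}) = card S - 1" using S u by simp
    have cS1: "card S \<ge> 1" using S cY by simp
    have cYu: "card Y \<le> card (S - {u})" using S(4) cY cSu by simp
    have IH1: "sg (S - {u}) * (\<Sum>j\<in>S - {u}. ?Q j * a j / Dn a (S - {u}) j)
      = (\<Prod>m\<in>Y. y m) * (\<Prod>l\<in>S - {u}. a l) - (if card Y = card S - 1 then (-c) ^ (card S - 1) else 0)"
      using insert.IH[rule_format, of "S - {u}"] S(1,3) inj_on_subset[OF S(2), of "S-{u}"] cYu cSu by simp
    have IH2: "sg S * (\<Sum>j\<in>S. ?Q j * a j / Dn a S j) = (\<Prod>m\<in>Y. y m) * (\<Prod>l\<in>S. a l)"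
      using insert.IH[rule_format, of S] S cY by simp
    have pt: "(\<Sum>j\<in>S. (\<Prod>m\<in>insert w Y. c / a j + y m) * a j / Dn a S j)
       = c * (\<Sum>j\<in>S. (?Q j * a j) * (1/a j - 1/a u) / Dn a S j) + (y w + c / a u) * (\<Sum>j\<in>S. ?Q j * a j / Dn a S j)"
      unfolding sum_distrib_left sum.distrib[symmetric]
    proof (rule sum.cong)
      fix j assume j: "j \<in> S"
      have h: "(\<Prod>m\<in>insert w Y. c / a j + y m) * a j = c * (?Q j * a j) * (1/a j - 1/a u) + (y w + c / a u) * (?Q j * a j)"
        using insert S j u by (simp add: field_simps)
      have "(\<Prod>m\<in>insert w Y. c / a j + y m) * a j / Dn a S j = (c * (?Q j * a j) * (1/a j - 1/a u) + (y w + c / a u) * (?Q j * a j)) / Dn a S j"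
        using h by (rule arg_cong)
      also have "\<dots> = c * ((?Q j * a j) * (1/a j - 1/a u) / Dn a S j) + (y w + c / a u) * (?Q j * a j / Dn a S j)"
        by (simp only: add_divide_distrib times_divide_eq_right mult.assoc)
      finally show "(\<Prod>m\<in>insert w Y. c / a j + y m) * a j / Dn a S j = c * ((?Q j * a j) * (1/a j - 1/a u) / Dn a S j) + (y w + c / a u) * (?Q j * a j / Dn a S j)" .
    qed simp
    have r: "(\<Sum>j\<in>S. (?Q j * a j) * (1/a j - 1/a u) / Dn a S j) = (\<Sum>j\<in>S - {u}. ?Q j * a j / Dn a (S - {u}) j)"
      by (rule rem) (use S u in auto)
    have sgn: "sg S * (\<Sum>j\<in>S - {u}. ?Q j * a j / Dn a (S - {u}) j) = - (sg (S - {u}) * (\<Sum>j\<in>S - {u}. ?Q j * a j / Dn a (S - {u}) j))"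
    proof (cases "card S = 1")
      case True
      hence e: "S - {u} = {}" using S u by (metis card_1_singletonE singletonD Diff_cancel)
      show ?thesis by (simp only: e sum.empty)
    next
      case False
      have "2 \<le> card S" using False cS1 by linarith
      then obtain m where mm: "card S = Suc (Suc m)" by (metis add_2_eq_Suc le_Suc_ex)
      hence m: "card (S - {u}) = Suc m" using cSu by simp
      from mm have "sg S = - sg (S - {u})" unfolding sg_def using m by simp
      thus ?thesis by simp
    qed
    have pS: "(\<Prod>l\<in>S. a l) = a u * (\<Prod>l\<in>S - {u}. a l)" using S u by (simp add: prod.remove)
    have au: "a u \<noteq> 0" using S u by auto
    have pw: "c * (-c) ^ (card S - 1) = - ((-c) ^ card S)" using cS1
      by (cases "card S") auto
    let ?A = "\<Prod>m\<in>Y. y m" and ?P = "\<Prod>l\<in>S - {u}. a l"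
    let ?X = "if card Y = card S - 1 then (-c) ^ (card S - 1) else 0"
    have "sg S * (\<Sum>j\<in>S. (\<Prod>m\<in>insert w Y. c / a j + y m) * a j / Dn a S j)
      = - c * (sg (S - {u}) * (\<Sum>j\<in>S - {u}. ?Q j * a j / Dn a (S - {u}) j)) + (y w + c / a u) * (sg S * (\<Sum>j\<in>S. ?Q j * a j / Dn a S j))"
      unfolding pt r using sgn by (simp only: distrib_left mult.assoc mult.left_commute[of "sg S"] mult_minus_right mult_minus_left)
    also have "\<dots> = - c * (?A * ?P - ?X) + (y w + c / a u) * (?A * (a u * ?P))"
      unfolding IH1 IH2 pS by (rule refl)
    also have "\<dots> = y w * ?A * (a u * ?P) + c * ?X"
      using au by (simp add: field_simps)
    also have "\<dots> = (\<Prod>m\<in>insert w Y. y m) * (\<Prod>l\<in>S. a l) - (if card (insert w Y) = card S then (-c) ^ card S else 0)"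
      using insert(1,2) cY cS1 pS pw by auto
    finally show "sg S * (\<Sum>j\<in>S. (\<Prod>m\<in>insert w Y. c / a j + y m) * a j / Dn a S j)
      = (\<Prod>m\<in>insert w Y. y m) * (\<Prod>l\<in>S. a l) - (if card (insert w Y) = card S then (-c) ^ card S else 0)" .
  qed
qed


lemma Dn_nz:
  assumes "finite S" "j \<in> S" "inj_on a S" "\<forall>j\<in>S. a j \<noteq> 0"
  shows "Dn a S j \<noteq> 0"
  unfolding Dn_def
proof -
  have "\<forall>l\<in>S - {j}. 1 / a j - 1 / a l \<noteq> 0"
  proof
    fix l assume l: "l \<in> S - {j}"
    hence "a l \<noteq> a j" using assms by (auto dest: inj_onD)
    thus "1 / a j - 1 / a l \<noteq> 0" using assms l by (auto simp: field_simps)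
  qed
  thus "(\<Prod>l\<in>S - {j}. 1 / a j - 1 / a l) \<noteq> 0" using assms(1) by (simp add: prod_zero_iff)
qed

lemma ar1: "D \<noteq> 0 \<Longrightarrow> aj \<noteq> 0 \<Longrightarrow> au \<noteq> 0 \<Longrightarrow>
  P / D * aj ^ (Suc k + 1) * t ^ Suc k - au * t * (P / D * aj ^ (k + 1) * t ^ k)
  = (P * aj ^ Suc k * t ^ Suc k * (- aj * au)) * (1 / aj - 1 / au) / (D::real)"
  by (simp add: field_simps)

lemma ar2: "D \<noteq> 0 \<Longrightarrow> aj \<noteq> 0 \<Longrightarrow> au \<noteq> 0 \<Longrightarrow> t \<noteq> 0 \<Longrightarrow>
  (P * ((1 - t) / (aj * t) + 1 / au) * aj ^ Suc k * t ^ Suc k * (- aj * au)) / (D::real)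
  = - (P / D * aj ^ Suc (Suc k) * t ^ Suc k + au * (1 - t) * (P / D * aj ^ Suc k * t ^ k))"
  by (simp add: field_simps)

definition Rf :: "(nat \<Rightarrow> real) \<Rightarrow> real \<Rightarrow> nat \<Rightarrow> nat \<Rightarrow> real" where
  "Rf a t n k = (-1) ^ (n - 1) * (\<Sum>j=1..n.
       (\<Prod>m=1..n. (1 - t) / (a j * t) + 1 / a m)
       / (\<Prod>l\<in>{1..n} - {j}. 1 / a j - 1 / a l)
       * a j ^ (k + 1) * t ^ k)"

lemma Rf_C:
  assumes "t \<noteq> 0" "\<forall>j\<in>{1..n}. a j \<noteq> 0" "inj_on a {1..n}"
  shows "Rf a t n 0 = 1 - (- ((1 - t) / t)) ^ n"
proof -
  let ?c = "(1 - t) / t"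
  have K: "sg {1..n} * (\<Sum>j\<in>{1..n}. (\<Prod>m\<in>{1..n}. ?c / a j + 1 / a m) * a j / Dn a {1..n} j)
      = (\<Prod>m\<in>{1..n}. 1 / a m) * (\<Prod>l\<in>{1..n}. a l) - (if card {1..n} = card {1..n} then (- ?c) ^ card {1..n} else 0)"
    using Klem[of "{1..n}" a ?c "\<lambda>m. 1 / a m"] assms by auto
  have p1: "(\<Prod>m\<in>{1..n}. 1 / a m) * (\<Prod>l\<in>{1..n}. a l) = 1"
    using assms(2) by (simp add: prod.distrib[symmetric])
  have "Rf a t n 0 = sg {1..n} * (\<Sum>j\<in>{1..n}. (\<Prod>m\<in>{1..n}. ?c / a j + 1 / a m) * a j / Dn a {1..n} j)"
    unfolding Rf_def sg_def Dn_def
    by (rule arg_cong2[where f="(*)"]) (auto intro!: sum.cong prod.cong simp: field_simps)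
  thus ?thesis using K p1 by simp
qed

lemma Rf_A:
  assumes "t \<noteq> 0" "\<forall>j\<in>{1..Suc m}. a j \<noteq> 0" "inj_on a {1..Suc m}"
  shows "Rf a t (Suc m) (Suc k) - a (Suc m) * t * Rf a t (Suc m) k
       = Rf a t m (Suc k) + a (Suc m) * (1 - t) * Rf a t m k"
proof -
  let ?u = "Suc m"
  let ?P = "\<lambda>n j. (\<Prod>i=1..n. (1 - t) / (a j * t) + 1 / a i)"
  let ?X = "\<lambda>j. ?P m j / Dn a {1..m} j * a j ^ Suc (Suc k) * t ^ Suc k"
  let ?Y = "\<lambda>j. ?P m j / Dn a {1..m} j * a j ^ Suc k * t ^ k"
  have S: "{1..Suc m} - {Suc m} = {1..m}" by auto
  have au: "a ?u \<noteq> 0" using assms by auto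
  have "(\<Sum>j=1..Suc m. ?P ?u j / Dn a {1..?u} j * a j ^ (Suc k + 1) * t ^ Suc k)
      - a ?u * t * (\<Sum>j=1..Suc m. ?P ?u j / Dn a {1..?u} j * a j ^ (k + 1) * t ^ k)
      = (\<Sum>j\<in>{1..Suc m}. (?P ?u j * a j ^ Suc k * t ^ Suc k * (- a j * a ?u)) * (1/a j - 1/a ?u) / Dn a {1..?u} j)"
    unfolding sum_distrib_left sum_subtractf[symmetric]
  proof (rule sum.cong)
    fix j assume j: "j \<in> {1..Suc m}"
    have "Dn a {1..?u} j \<noteq> 0" by (rule Dn_nz) (use assms j in auto)
    moreover have "a j \<noteq> 0" using assms j by auto
    ultimately show "?P ?u j / Dn a {1..?u} j * a j ^ (Suc k + 1) * t ^ Suc k - a ?u * t * (?P ?u j / Dn a {1..?u} j * a j ^ (k + 1) * t ^ k)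
      = (?P ?u j * a j ^ Suc k * t ^ Suc k * (- a j * a ?u)) * (1/a j - 1/a ?u) / Dn a {1..?u} j"
      using au by (rule ar1)
  qed simp
  also have "\<dots> = (\<Sum>j\<in>{1..m}. (?P ?u j * a j ^ Suc k * t ^ Suc k * (- a j * a ?u)) / Dn a {1..m} j)"
    using rem[of "{1..Suc m}" ?u a "\<lambda>j. ?P ?u j * a j ^ Suc k * t ^ Suc k * (- a j * a ?u)"] assms S by simp
  also have "\<dots> = - ((\<Sum>j\<in>{1..m}. ?X j) + a ?u * (1 - t) * (\<Sum>j\<in>{1..m}. ?Y j))"
    unfolding sum_distrib_left sum.distrib[symmetric] sum_negf[symmetric]
  proof (rule sum.cong)
    fix j assume j: "j \<in> {1..m}"
    have "Dn a {1..m} j \<noteq> 0" by (rule Dn_nz) (use assms j in \<open>auto intro: inj_on_subset\<close>)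
    moreover have "a j \<noteq> 0" using assms j by auto
    moreover have "?P ?u j = ?P m j * ((1 - t) / (a j * t) + 1 / a ?u)" by simp
    ultimately show "(?P ?u j * a j ^ Suc k * t ^ Suc k * (- a j * a ?u)) / Dn a {1..m} j = - (?X j + a ?u * (1 - t) * ?Y j)"
      using au assms(1) ar2 by metis
  qed simp
  finally have main: "(\<Sum>j=1..Suc m. ?P ?u j / Dn a {1..?u} j * a j ^ (Suc k + 1) * t ^ Suc k)
      - a ?u * t * (\<Sum>j=1..Suc m. ?P ?u j / Dn a {1..?u} j * a j ^ (k + 1) * t ^ k)
      = - ((\<Sum>j\<in>{1..m}. ?X j) + a ?u * (1 - t) * (\<Sum>j\<in>{1..m}. ?Y j))" .
  have L: "Rf a t (Suc m) (Suc k) - a (Suc m) * t * Rf a t (Suc m) k = (-1) ^ m * (- ((\<Sum>j\<in>{1..m}. ?X j) + a ?u * (1 - t) * (\<Sum>j\<in>{1..m}. ?Y j)))"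
    unfolding Rf_def Dn_def[symmetric] main[symmetric] by (simp add: algebra_simps)
  have R: "Rf a t m (Suc k) + a (Suc m) * (1 - t) * Rf a t m k = (-1) ^ (m - 1) * ((\<Sum>j\<in>{1..m}. ?X j) + a ?u * (1 - t) * (\<Sum>j\<in>{1..m}. ?Y j))"
    unfolding Rf_def Dn_def[symmetric] by (simp add: algebra_simps)
  show ?thesis
  proof (cases m)
    case 0 thus ?thesis using L R by simp
  next
    case (Suc m')
    have s: "(-1::real) ^ m = - ((-1) ^ (m - 1))" using Suc by simp
    show ?thesis unfolding L R s by (simp only: mult_minus_left mult_minus_right minus_minus)
  qed
qed


lemma Mset_0: "Mset n 0 = {[]}" by (auto simp: Mset_def)

lemma Mset_empty: "Mset 0 (Suc k) = {}" by (auto simp: Mset_def)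

lemma sig_Nil: "sig [] = 0" by (simp add: sig_def)

lemma theta_0: "theta a n 0 t = 1" by (simp add: theta_def Mset_0 sig_Nil wt_def)

lemma theta_empty: "theta a 0 (Suc k) t = 0" by (simp add: theta_def Mset_empty)

lemma finite_Mset: "finite (Mset n k)"
proof -
  have "Mset n k \<subseteq> {xs. set xs \<subseteq> {1..n} \<and> length xs = k}" by (auto simp: Mset_def)
  thus ?thesis by (rule finite_subset) (simp add: finite_lists_length_eq)
qed

lemma Mset_low: "1 \<le> n \<Longrightarrow> Mset (n - 1) k = {xs\<in>Mset n k. \<not> (xs \<noteq> [] \<and> hd xs = n)}"
proof (intro set_eqI iffI)
  fix xs assume n: "1 \<le> n" and xs: "xs \<in> Mset (n - 1) k"
  thus "xs \<in> {xs\<in>Mset n k. \<not> (xs \<noteq> [] \<and> hd xs = n)}"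
    by (cases xs) (auto simp: Mset_def subset_iff)
next
  fix xs assume n: "1 \<le> n" and xs: "xs \<in> {xs\<in>Mset n k. \<not> (xs \<noteq> [] \<and> hd xs = n)}"
  show "xs \<in> Mset (n - 1) k"
  proof (cases xs)
    case Nil thus ?thesis using xs by (auto simp: Mset_def)
  next
    case (Cons x ys)
    have "x \<le> n - 1" using xs Cons by (auto simp: Mset_def)
    moreover have "\<forall>y\<in>set ys. y \<le> x" using xs Cons by (auto simp: Mset_def)
    ultimately show ?thesis using xs Cons by (force simp: Mset_def)
  qed
qed

lemma Mset_high: "1 \<le> n \<Longrightarrow> {xs\<in>Mset n (Suc k). xs \<noteq> [] \<and> hd xs = n} = (Cons n) ` Mset n k"
proof (intro set_eqI iffI)
  fix xs assume "xs \<in> {xs\<in>Mset n (Suc k). xs \<noteq> [] \<and> hd xs = n}"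
  thus "xs \<in> (Cons n) ` Mset n k" by (cases xs) (auto simp: Mset_def subset_iff)
next
  fix xs assume "1 \<le> n" "xs \<in> (Cons n) ` Mset n k"
  thus "xs \<in> {xs\<in>Mset n (Suc k). xs \<noteq> [] \<and> hd xs = n}" by (auto simp: Mset_def subset_iff)
qed

lemma sig_Cons: "sig (x # xs) = sig xs + (if xs \<noteq> [] \<and> hd xs = x then 1 else 0)"
proof -
  let ?A = "{j. Suc j < length xs \<and> xs ! j = xs ! Suc j}"
  have eq: "{j. Suc j < length (x # xs) \<and> (x # xs) ! j = (x # xs) ! Suc j}
      = (if xs \<noteq> [] \<and> hd xs = x then {0} else {}) \<union> Suc ` ?A"
  proof (intro set_eqI iffI)
    fix j assume "j \<in> {j. Suc j < length (x # xs) \<and> (x # xs) ! j = (x # xs) ! Suc j}"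
    thus "j \<in> (if xs \<noteq> [] \<and> hd xs = x then {0} else {}) \<union> Suc ` ?A"
      by (cases j) (auto simp: hd_conv_nth)
  next
    fix j assume "j \<in> (if xs \<noteq> [] \<and> hd xs = x then {0} else {}) \<union> Suc ` ?A"
    thus "j \<in> {j. Suc j < length (x # xs) \<and> (x # xs) ! j = (x # xs) ! Suc j}"
      by (auto simp: hd_conv_nth split: if_splits)
  qed
  have fin: "finite ?A" by (rule finite_subset[of _ "{..<length xs}"]) auto
  have "card ((if xs \<noteq> [] \<and> hd xs = x then {0} else {}) \<union> Suc ` ?A)
      = card (if xs \<noteq> [] \<and> hd xs = x then {0::nat} else {}) + card (Suc ` ?A)"
    by (rule card_Un_disjoint) (use fin in auto)
  thus ?thesis unfolding sig_def eq by (simp add: card_image)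
qed

lemma wt_Cons: "wt a (x # xs) = a x * wt a xs"
  unfolding wt_def length_Cons prod.lessThan_Suc_shift by simp

lemma split_sum:
  assumes "1 \<le> n"
  shows "(\<Sum>ls\<in>Mset n k. f ls) = (\<Sum>ls\<in>Mset (n - 1) k. f ls) + (\<Sum>ls\<in>{xs\<in>Mset n k. xs \<noteq> [] \<and> hd xs = n}. f ls)"
proof -
  have "Mset n k = Mset (n - 1) k \<union> {xs\<in>Mset n k. xs \<noteq> [] \<and> hd xs = n}"
    using Mset_low[OF assms, of k] by auto
  moreover have "Mset (n - 1) k \<inter> {xs\<in>Mset n k. xs \<noteq> [] \<and> hd xs = n} = {}"
    using Mset_low[OF assms, of k] by auto
  ultimately show ?thesis
    using finite_Mset[of n k] finite_Mset[of "n - 1" k]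
    by (metis (no_types, lifting) finite_Un sum.union_disjoint)
qed

lemma theta_rec:
  assumes "1 \<le> n"
  shows "theta a n (Suc k) t = theta a (n - 1) (Suc k) t + a n * (t * (theta a n k t - theta a (n - 1) k t) + theta a (n - 1) k t)"
proof -
  let ?g = "\<lambda>ys. wt a ys * t ^ sig ys * (if ys \<noteq> [] \<and> hd ys = n then t else 1)"
  let ?H = "\<lambda>k. {xs\<in>Mset n k. xs \<noteq> [] \<and> hd xs = n}"
  have h1: "(\<Sum>ls\<in>?H (Suc k). wt a ls * t ^ sig ls) = a n * (\<Sum>ys\<in>Mset n k. ?g ys)"
    unfolding Mset_high[OF assms] sum_distrib_left
    by (subst sum.reindex) (auto simp: wt_Cons sig_Cons power_add intro!: sum.cong)
  have h2: "(\<Sum>ys\<in>Mset n k. ?g ys) = (\<Sum>ys\<in>Mset (n-1) k. ?g ys) + (\<Sum>ys\<in>?H k. ?g ys)"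
    by (rule split_sum[OF assms])
  have h3: "(\<Sum>ys\<in>Mset (n-1) k. ?g ys) = theta a (n - 1) k t"
    unfolding theta_def using Mset_low[OF assms, of k] by (intro sum.cong) auto
  have h4: "(\<Sum>ys\<in>?H k. ?g ys) = t * (\<Sum>ys\<in>?H k. wt a ys * t ^ sig ys)"
    unfolding sum_distrib_left by (intro sum.cong) auto
  have h5: "theta a n k t = theta a (n - 1) k t + (\<Sum>ys\<in>?H k. wt a ys * t ^ sig ys)"
    unfolding theta_def by (rule split_sum[OF assms])
  have h6: "theta a n (Suc k) t = theta a (n - 1) (Suc k) t + (\<Sum>ls\<in>?H (Suc k). wt a ls * t ^ sig ls)"
    unfolding theta_def by (rule split_sum[OF assms])
  show ?thesis using h1 h2 h3 h4 h5 h6 by simp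
qed


lemma Rf_zero: "Rf a t 0 k = 0" by (simp add: Rf_def)

lemma ar3: "(t::real) \<noteq> 0 \<Longrightarrow> au * t * (1 - (- ((1 - t) / t)) * z) + au * (1 - t) * (1 - z) = au"
  by (simp add: field_simps)

theorem mainTheorem5:
  fixes a :: "nat \<Rightarrow> real" and n k :: nat and t :: real
  assumes "n \<ge> 1" and "k \<ge> 1" and "t \<noteq> 0"
    and "\<And>j. j \<ge> 1 \<Longrightarrow> a j > 0"
    and "inj_on a {1..n}"
  shows "theta a n k t =
    (-1) ^ (n - 1) * (\<Sum>j=1..n.
       (\<Prod>m=1..n. (1 - t) / (a j * t) + 1 / a m)
       / (\<Prod>l\<in>{1..n} - {j}. 1 / a j - 1 / a l)
       * a j ^ (k + 1) * t ^ k)"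
proof -
  have nz: "\<forall>j\<in>{1..m}. a j \<noteq> 0" for m using assms(4) by force
  have inj: "m \<le> n \<Longrightarrow> inj_on a {1..m}" for m
    using assms(5) by (rule inj_on_subset) auto
  have "\<forall>k. 1 \<le> k \<longrightarrow> theta a m k t = Rf a t m k" if "m \<le> n" for m
    using that
  proof (induction m)
    case 0
    show ?case
    proof (intro allI impI)
      fix k :: nat assume "1 \<le> k"
      then obtain k' where "k = Suc k'" by (cases k) auto
      thus "theta a 0 k t = Rf a t 0 k" by (simp add: theta_empty Rf_zero)
    qed
  next
    case (Suc m)
    have IH: "\<And>k. 1 \<le> k \<Longrightarrow> theta a m k t = Rf a t m k" using Suc by auto
    have injS: "inj_on a {1..Suc m}" using inj Suc.prems by simp
    have injm: "inj_on a {1..m}" using inj Suc.prems by simp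
    have rec: "theta a (Suc m) (Suc k) t = theta a m (Suc k) t + a (Suc m) * (t * (theta a (Suc m) k t - theta a m k t) + theta a m k t)" for k
      using theta_rec[of "Suc m" a k t] by simp
    have A: "Rf a t (Suc m) (Suc k) = a (Suc m) * t * Rf a t (Suc m) k + Rf a t m (Suc k) + a (Suc m) * (1 - t) * Rf a t m k" for k
      using Rf_A[OF assms(3) nz injS, of k] by (simp add: algebra_simps)
    have step: "theta a (Suc m) (Suc k') t = Rf a t (Suc m) (Suc k')" for k'
    proof (induction k')
      case 0
      have C1: "Rf a t (Suc m) 0 = 1 - (- ((1 - t) / t)) * (- ((1 - t) / t)) ^ m"
        using Rf_C[OF assms(3) nz injS] by simp
      have C0: "Rf a t m 0 = 1 - (- ((1 - t) / t)) ^ m"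
        using Rf_C[OF assms(3) nz injm] .
      have "theta a (Suc m) (Suc 0) t = Rf a t m (Suc 0) + a (Suc m)"
        using rec[of 0] IH[of 1] by (simp add: theta_0)
      also have "\<dots> = Rf a t (Suc m) (Suc 0)"
        unfolding A[of 0] C1 C0 using ar3[OF assms(3), of "a (Suc m)" "(- ((1 - t) / t)) ^ m"] by simp
      finally show ?case .
    next
      case (Suc k')
      show ?case
        using rec[of "Suc k'"] A[of "Suc k'"] IH[of "Suc k'"] IH[of "Suc (Suc k')"] Suc.IH by (simp add: algebra_simps)
    qed
    show ?case
    proof (intro allI impI)
      fix k :: nat assume "1 \<le> k"
      then obtain k' where "k = Suc k'" by (cases k) auto
      thus "theta a (Suc m) k t = Rf a t (Suc m) k" using step by simp
    qed
  qed
  hence "theta a n k t = Rf a t n k" using assms(2) by simp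
  thus ?thesis unfolding Rf_def .
qed

end
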